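(* Let $\delta>0$ and let $(T_N)_{N\in\mathbb{N}}$ be a sequence with $T_N\in2\mathbb{N}$, $T_N\le N$, $T_N\to\infty$ and $T_N-\frac{\log N}{c_\delta}\to+\infty$ as $N\to\infty$. Then the laws of $S_N$ under $\mathbf P^{T_N}_{N,\delta}$ are tight: $$\lim_{L\to\infty}\sup_{N\in\mathbb{N}}\mathbf P^{T_N}_{N,\delta}(|S_N|>L)=0.$$
   Context: $(S_n)_{n\ge0}$ is the simple symmetric random walk on $\mathbb{Z}$ started at $0$, with law $\mathbf P$. For $T\in2\mathbb{N}$, $N\in\mathbb{N}$, $\delta\in\mathbb{R}$, the polymer measure $\mathbf P^T_{N,\delta}$ is defined by $\frac{d\mathbf P^T_{N,\delta}}{d\mathbf P}(S)=\frac{\exp(\delta\sum_{i=1}^N\mathbf 1_{\{S_i\in T\mathbb Z\}})}{Z^T_{N,\delta}}$, with $Z^T_{N,\delta}$ the normalizing constant. The constant $c_\delta:=\frac{\delta}{2}+\log\sqrt{2-e^{-\delta}}$. *)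

theory Defs
  imports Complex_Main
begin

text \<open>Paths of the simple random walk up to time N, encoded by their increments
  (a list of N steps, each in {-1,1}); under P every such path has probability 2^(-N).\<close>
definition srw_paths :: "nat \<Rightarrow> int list set" where
  "srw_paths N = {xs. length xs = N \<and> set xs \<subseteq> {-1, 1}}"

definition walk_pos :: "int list \<Rightarrow> nat \<Rightarrow> int" where
  "walk_pos xs i = sum_list (take i xs)"

definition polymer_weight :: "nat \<Rightarrow> nat \<Rightarrow> real \<Rightarrow> int list \<Rightarrow> real" where
  "polymer_weight T N \<delta> xs =
     exp (\<delta> * real (card {i \<in> {1..N}. int T dvd walk_pos xs i}))"

definition polymer_Z :: "nat \<Rightarrow> nat \<Rightarrow> real \<Rightarrow> real" where
  "polymer_Z T N \<delta> = (\<Sum>xs\<in>srw_paths N. polymer_weight T N \<delta> xs) / 2 ^ N"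

definition polymer_prob :: "nat \<Rightarrow> nat \<Rightarrow> real \<Rightarrow> (int list \<Rightarrow> bool) \<Rightarrow> real" where
  "polymer_prob T N \<delta> A =
     ((\<Sum>xs\<in>{xs\<in>srw_paths N. A xs}. polymer_weight T N \<delta> xs) / 2 ^ N) / polymer_Z T N \<delta>"

definition c_delta :: "real \<Rightarrow> real" where
  "c_delta \<delta> = \<delta> / 2 + ln (sqrt (2 - exp (- \<delta>)))"

end

theory Submission
  imports Defs
begin


definition ee :: "nat \<Rightarrow> real \<Rightarrow> int \<Rightarrow> real" where
  "ee T \<delta> z = (if int T dvd z then exp \<delta> else 1)"

definition V :: "nat \<Rightarrow> real \<Rightarrow> nat \<Rightarrow> (int \<Rightarrow> real) \<Rightarrow> real" where
  "V T \<delta> n f = (\<Sum>xs\<in>srw_paths n. polymer_weight T n \<delta> xs * f (walk_pos xs n))"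

definition Qop :: "nat \<Rightarrow> real \<Rightarrow> (int \<Rightarrow> real) \<Rightarrow> int \<Rightarrow> real" where
  "Qop T \<delta> f z = ee T \<delta> (z - 1) * f (z - 1) + ee T \<delta> (z + 1) * f (z + 1)"

lemma finite_paths: "finite (srw_paths n)"
proof -
  have "srw_paths n = {xs. set xs \<subseteq> {-1,1} \<and> length xs = n}" by (auto simp: srw_paths_def)
  thus ?thesis using finite_lists_length_eq[of "{-1,1::int}" n] by simp
qed

lemma paths_0: "srw_paths 0 = {[]}" by (auto simp: srw_paths_def)

lemma paths_Suc: "srw_paths (Suc n) = (\<lambda>(xs,s). xs @ [s]) ` (srw_paths n \<times> {-1,1})"
proof
  show "srw_paths (Suc n) \<subseteq> (\<lambda>(xs,s). xs @ [s]) ` (srw_paths n \<times> {-1,1})"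
  proof
    fix ys assume "ys \<in> srw_paths (Suc n)"
    hence l: "length ys = Suc n" and s: "set ys \<subseteq> {-1,1}" by (auto simp: srw_paths_def)
    then obtain xs a where ys: "ys = xs @ [a]" by (metis length_Suc_conv_rev)
    show "ys \<in> (\<lambda>(xs,s). xs @ [s]) ` (srw_paths n \<times> {-1,1})"
      using l s unfolding ys by (auto simp: srw_paths_def image_iff)
  qed
qed (auto simp: srw_paths_def)

lemma walk_pos_snoc1: "length xs = n \<Longrightarrow> i \<le> n \<Longrightarrow> walk_pos (xs @ [s]) i = walk_pos xs i"
  by (simp add: walk_pos_def)

lemma walk_pos_snoc2: "length xs = n \<Longrightarrow> walk_pos (xs @ [s]) (Suc n) = walk_pos xs n + s"
  by (simp add: walk_pos_def)

lemma pw_snoc: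
  assumes "length xs = n"
  shows "polymer_weight T (Suc n) \<delta> (xs @ [s]) = polymer_weight T n \<delta> xs * ee T \<delta> (walk_pos xs n + s)"
proof -
  let ?P = "\<lambda>i. int T dvd walk_pos (xs @ [s]) i"
  have A: "{i \<in> {1..Suc n}. ?P i} = (if ?P (Suc n) then insert (Suc n) else id) {i \<in> {1..n}. int T dvd walk_pos xs i}"
    using assms by (auto simp: walk_pos_snoc1 le_Suc_eq)
  have fin: "finite {i \<in> {1..n}. int T dvd walk_pos xs i}" by simp
  show ?thesis
    unfolding polymer_weight_def ee_def A using walk_pos_snoc2[OF assms, of s] fin
    by (auto simp: card_insert_if distrib_left exp_add)
qed

lemma pw_pos: "polymer_weight T n \<delta> xs > 0" by (simp add: polymer_weight_def)

lemma V_Suc: "V T \<delta> (Suc n) f = V T \<delta> n (Qop T \<delta> f)"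
proof -
  have inj: "inj_on (\<lambda>(xs,s). xs @ [s]) (srw_paths n \<times> {-1,1::int})"
    by (auto simp: inj_on_def)
  have "V T \<delta> (Suc n) f = (\<Sum>(xs,s)\<in>srw_paths n \<times> {-1,1}. polymer_weight T (Suc n) \<delta> (xs@[s]) * f (walk_pos (xs@[s]) (Suc n)))"
    unfolding V_def paths_Suc by (subst sum.reindex[OF inj]) (simp add: case_prod_unfold)
  also have "\<dots> = (\<Sum>xs\<in>srw_paths n. \<Sum>s\<in>{-1,1}. polymer_weight T n \<delta> xs * ee T \<delta> (walk_pos xs n + s) * f (walk_pos xs n + s))"
    unfolding sum.cartesian_product[symmetric]
    by (intro sum.cong refl) (auto simp: pw_snoc walk_pos_snoc2 srw_paths_def)
  also have "\<dots> = V T \<delta> n (Qop T \<delta> f)"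
    unfolding V_def Qop_def by (intro sum.cong refl) (simp add: algebra_simps)
  finally show ?thesis .
qed

lemma V_0: "V T \<delta> 0 f = f 0"
  by (simp add: V_def paths_0 polymer_weight_def walk_pos_def)

lemma V_mono: "(\<And>z. f z \<le> g z) \<Longrightarrow> V T \<delta> n f \<le> V T \<delta> n g"
  unfolding V_def by (intro sum_mono mult_left_mono) (auto intro: less_imp_le pw_pos)

lemma V_scale: "V T \<delta> n (\<lambda>z. a * f z) = a * V T \<delta> n f"
  unfolding V_def by (simp add: sum_distrib_left algebra_simps)

lemma V_add: "V T \<delta> n (\<lambda>z. f z + g z) = V T \<delta> n f + V T \<delta> n g"
  unfolding V_def by (simp add: sum.distrib algebra_simps)

lemma V_nonneg: "(\<And>z. f z \<ge> 0) \<Longrightarrow> V T \<delta> n f \<ge> 0"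
  unfolding V_def by (intro sum_nonneg mult_nonneg_nonneg) (auto intro: less_imp_le pw_pos)

lemma V_sub:
  assumes "\<And>z. Qop T \<delta> h z \<ge> r * h z" "r \<ge> 0"
  shows "V T \<delta> n h \<ge> r ^ n * h 0"
proof (induction n)
  case 0 thus ?case by (simp add: V_0)
next
  case (Suc n)
  have "r ^ Suc n * h 0 = r * (r ^ n * h 0)" by simp
  also have "\<dots> \<le> r * V T \<delta> n h" using Suc assms(2) by (intro mult_left_mono)
  also have "\<dots> = V T \<delta> n (\<lambda>z. r * h z)" by (simp add: V_scale)
  also have "\<dots> \<le> V T \<delta> n (Qop T \<delta> h)" by (intro V_mono assms(1))
  also have "\<dots> = V T \<delta> (Suc n) h" by (simp add: V_Suc)
  finally show ?case .
qed

definition K :: "nat \<Rightarrow> real \<Rightarrow> nat \<Rightarrow> int \<Rightarrow> real" where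
  "K T \<delta> n y = V T \<delta> n (\<lambda>z. if z = y then 1 else 0)"

lemma K_Suc: "K T \<delta> (Suc n) y = ee T \<delta> y * (K T \<delta> n (y - 1) + K T \<delta> n (y + 1))"
proof -
  have "Qop T \<delta> (\<lambda>z. if z = y then 1 else 0) = (\<lambda>z. ee T \<delta> y * (if z = y - 1 then 1 else 0) + ee T \<delta> y * (if z = y + 1 then 1 else 0))"
    by (auto simp: Qop_def fun_eq_iff)
  thus ?thesis unfolding K_def V_Suc by (simp add: V_add V_scale algebra_simps)
qed

lemma K_0: "K T \<delta> 0 y = (if y = 0 then 1 else 0)"
  by (simp add: K_def V_0)

lemma K_nonneg: "K T \<delta> n y \<ge> 0"
  unfolding K_def by (rule V_nonneg) simp

lemma K_super:
  assumes "\<And>y. G y \<ge> 0" "G 0 \<ge> 1" "\<And>y. ee T \<delta> y * (G (y - 1) + G (y + 1)) \<le> r * G y" "r \<ge> 0"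
  shows "K T \<delta> n y \<le> r ^ n * G y"
proof (induction n arbitrary: y)
  case 0 thus ?case using assms(1,2) by (simp add: K_0)
next
  case (Suc n)
  have e: "ee T \<delta> y \<ge> 0" by (simp add: ee_def)
  have "K T \<delta> (Suc n) y \<le> ee T \<delta> y * (r ^ n * G (y - 1) + r ^ n * G (y + 1))"
    unfolding K_Suc using Suc e by (intro mult_left_mono add_mono) auto
  also have "\<dots> = r ^ n * (ee T \<delta> y * (G (y - 1) + G (y + 1)))" by (simp add: algebra_simps)
  also have "\<dots> \<le> r ^ n * (r * G y)" using assms(3,4) by (intro mult_left_mono) auto
  finally show ?case by (simp add: algebra_simps)
qed

lemma abs_sum_list: "set ys \<subseteq> {-1,1} \<Longrightarrow> \<bar>sum_list ys\<bar> \<le> int (length ys)"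
  by (induction ys) auto

lemma walk_bound: "xs \<in> srw_paths n \<Longrightarrow> \<bar>walk_pos xs n\<bar> \<le> int n"
  unfolding walk_pos_def srw_paths_def
  using abs_sum_list[of "take n xs"] by (auto dest: in_set_takeD)

lemma V_decomp: "V T \<delta> n f = (\<Sum>y\<in>{-int n..int n}. f y * K T \<delta> n y)"
proof -
  have "(\<Sum>y\<in>{-int n..int n}. f y * K T \<delta> n y) =
        (\<Sum>y\<in>{-int n..int n}. \<Sum>xs\<in>srw_paths n. polymer_weight T n \<delta> xs * (if walk_pos xs n = y then f y else 0))"
    unfolding K_def V_def by (simp add: sum_distrib_left algebra_simps if_distrib cong: if_cong)
  also have "\<dots> = (\<Sum>xs\<in>srw_paths n. \<Sum>y\<in>{-int n..int n}. polymer_weight T n \<delta> xs * (if walk_pos xs n = y then f y else 0))"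
    by (rule sum.swap)
  also have "\<dots> = V T \<delta> n f"
    unfolding V_def
  proof (intro sum.cong refl)
    fix xs assume "xs \<in> srw_paths n"
    hence "walk_pos xs n \<in> {-int n..int n}" using walk_bound[of xs n] by auto
    thus "(\<Sum>y\<in>{-int n..int n}. polymer_weight T n \<delta> xs * (if walk_pos xs n = y then f y else 0)) =
          polymer_weight T n \<delta> xs * f (walk_pos xs n)"
      by (simp add: if_distrib[of "\<lambda>x. polymer_weight T n \<delta> xs * x"] sum.delta cong: if_cong)
  qed
  finally show ?thesis ..
qed



definition phi :: "nat \<Rightarrow> real \<Rightarrow> nat \<Rightarrow> real" where
  "phi T q r = q ^ r + q ^ (T - r)"

definition hh :: "nat \<Rightarrow> real \<Rightarrow> real \<Rightarrow> int \<Rightarrow> real" where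
  "hh T q \<rho> y = (if int T dvd y then q / \<rho> * phi T q 0 else phi T q (nat (y mod int T)))"

lemma phi_rec:
  assumes "Suc (Suc j) \<le> T" "q > 0"
  shows "phi T q j + phi T q (Suc (Suc j)) = (q + 1/q) * phi T q (Suc j)"
proof -
  obtain m where m: "T = Suc (Suc j) + m" using assms(1) le_Suc_ex by blast
  have e1: "T - j = Suc (Suc m)" and e2: "T - Suc j = Suc m" and e3: "T - Suc (Suc j) = m" using m by auto
  show ?thesis unfolding phi_def e1 e2 e3 using assms(2) by (simp add: field_simps)
qed

lemma phi_T: "phi T q T = phi T q 0" by (simp add: phi_def)

lemma phi_le: assumes "r \<le> T" "0 \<le> q" "q \<le> 1" shows "phi T q r \<le> phi T q 0"
proof -
  have "(1 - q ^ r) * (1 - q ^ (T - r)) \<ge> 0"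
    using assms by (intro mult_nonneg_nonneg) (auto simp: power_le_one)
  moreover have "q ^ r * q ^ (T - r) = q ^ T" using assms(1) by (simp add: power_add[symmetric])
  ultimately show ?thesis unfolding phi_def by (simp add: algebra_simps)
qed

lemma phi_nonneg: "q \<ge> 0 \<Longrightarrow> phi T q r \<ge> 0" by (simp add: phi_def)

context
  fixes T :: nat and q \<rho> \<delta> :: real
  assumes T2: "T \<ge> 2" and q0: "0 < q" and q1: "q < 1" and rho: "\<rho> = (q + 1/q)/2"
    and ed: "exp \<delta> * q = \<rho>"
begin

lemma rho_pos: "\<rho> > 0"
proof -
  have "q + 1/q > 0" using q0 by (simp add: add_pos_pos)
  thus ?thesis using rho by simp
qed

lemma ee_hh: "ee T \<delta> z * hh T q \<rho> z = phi T q (nat (z mod int T))"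
  using ed rho_pos by (auto simp: ee_def hh_def field_simps)

lemma mod_intro: "(0::int) \<le> b \<Longrightarrow> b < m \<Longrightarrow> y = m*t + b \<Longrightarrow> y mod m = b"
  by simp

lemma hh_sub: "Qop T \<delta> (hh T q \<rho>) y \<ge> (2 * \<rho>) * hh T q \<rho> y"
proof -
  define r where "r = y mod int T"
  define t where "t = y div int T"
  have Tp: "int T > 0" using T2 by simp
  have yr: "y = int T * t + r" unfolding r_def t_def by simp
  have r0: "0 \<le> r" "r < int T" unfolding r_def using Tp by auto
  have Q: "Qop T \<delta> (hh T q \<rho>) y = phi T q (nat ((y - 1) mod int T)) + phi T q (nat ((y + 1) mod int T))"
    unfolding Qop_def ee_hh ..
  show ?thesis
  proof (cases "r = 0")
    case True
    have a: "(y - 1) mod int T = int T - 1"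
      by (rule mod_intro[where t="t - 1"]) (use T2 yr True in \<open>auto simp: algebra_simps\<close>)
    have b: "(y + 1) mod int T = 1"
      by (rule mod_intro[where t="t"]) (use T2 yr True in \<open>auto simp: algebra_simps\<close>)
    have QQ: "Qop T \<delta> (hh T q \<rho>) y = phi T q (T - 1) + phi T q 1"
    proof -
      have ii: "int T - 1 = int (T - 1)" using T2 by simp
      have n1: "nat 1 = 1" by simp
      show ?thesis unfolding Q a b ii nat_int n1 by (rule refl)
    qed
    have "int T dvd y" using True r_def by auto
    hence hy: "hh T q \<rho> y = q / \<rho> * phi T q 0" by (simp add: hh_def)
    have "phi T q (T - 1) = phi T q 1" using T2 by (simp add: phi_def)
    moreover have "q * phi T q 0 \<le> phi T q 1"
    proof -
      have "q ^ (T + 1) \<le> q ^ (T - 1)" using q0 q1 by (intro power_decreasing) auto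
      moreover have "q ^ (T+1) = q * q ^ T" by simp
      ultimately show ?thesis using T2 by (simp add: phi_def algebra_simps)
    qed
    moreover have "2 * \<rho> * (q / \<rho> * phi T q 0) = 2 * (q * phi T q 0)" using rho_pos by simp
    ultimately show ?thesis unfolding QQ hy by linarith
  next
    case False
    have "nat r > 0" using False r0 by simp
    then obtain j where j: "nat r = Suc j" using gr0_implies_Suc by blast
    have jT: "Suc (Suc j) \<le> T" using j r0 by linarith
    have ndvd: "\<not> int T dvd y" using False r_def by (simp add: dvd_eq_mod_eq_0)
    have m1: "(y - 1) mod int T = r - 1"
      by (rule mod_intro[where t="t"]) (use yr r0 False in \<open>auto simp: algebra_simps\<close>)
    have p1: "phi T q (nat ((y + 1) mod int T)) = phi T q (Suc (Suc j))"
    proof (cases "r + 1 = int T")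
      case True
      have "(y + 1) mod int T = 0"
        by (rule mod_intro[where t="t+1"]) (use yr True Tp in \<open>auto simp: algebra_simps\<close>)
      moreover have "Suc (Suc j) = T" using True j by linarith
      ultimately show ?thesis using phi_T by simp
    next
      case False
      have "(y + 1) mod int T = r + 1"
        by (rule mod_intro[where t="t"]) (use yr r0 False in \<open>auto simp: algebra_simps\<close>)
      thus ?thesis using j r0 by (simp add: nat_add_distrib)
    qed
    have "int (nat r) = r" using r0 by simp
    hence "r = int j + 1" using j by simp
    hence "nat (r - 1) = j" by simp
    hence "Qop T \<delta> (hh T q \<rho>) y = (q + 1/q) * phi T q (Suc j)"
      unfolding Q m1 p1 using phi_rec[OF jT q0] by simp
    moreover have "hh T q \<rho> y = phi T q (Suc j)" using ndvd j r_def by (simp add: hh_def)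
    moreover have "2 * \<rho> = q + 1/q" using rho by simp
    ultimately show ?thesis by simp
  qed
qed

lemma hh_nonneg: "hh T q \<rho> y \<ge> 0"
  using q0 rho_pos phi_nonneg[of q] by (simp add: hh_def)

lemma hh_le: "hh T q \<rho> y \<le> phi T q 0"
proof -
  have "q / \<rho> \<le> 1"
  proof -
    have "q \<le> 1/q" using q0 q1 by (simp add: field_simps) (metis less_eq_real_def mult_le_one q1 q0 less_imp_le)
    hence "q \<le> \<rho>" using rho by simp
    thus ?thesis using rho_pos by simp
  qed
  hence "q / \<rho> * phi T q 0 \<le> 1 * phi T q 0" using phi_nonneg[of q T 0] q0 by (intro mult_right_mono) auto
  moreover have "phi T q (nat (y mod int T)) \<le> phi T q 0"
    using T2 q0 q1 by (intro phi_le) (auto simp: nat_le_iff less_imp_le)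
  ultimately show ?thesis by (simp add: hh_def)
qed

lemma V_lower: "V T \<delta> n (\<lambda>_. 1) \<ge> (2 * \<rho>) ^ n * (q / \<rho>)"
proof -
  have P: "phi T q 0 > 0" using q0 by (simp add: phi_def add_pos_pos)
  have "(2 * \<rho>) ^ n * hh T q \<rho> 0 \<le> V T \<delta> n (hh T q \<rho>)"
    using hh_sub rho_pos by (intro V_sub) auto
  also have "\<dots> \<le> V T \<delta> n (\<lambda>_. phi T q 0 * 1)" by (intro V_mono) (simp add: hh_le)
  also have "\<dots> = phi T q 0 * V T \<delta> n (\<lambda>_. 1)" by (rule V_scale)
  finally have "(2 * \<rho>) ^ n * (q / \<rho> * phi T q 0) \<le> phi T q 0 * V T \<delta> n (\<lambda>_. 1)"
    by (simp add: hh_def)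
  hence "((2 * \<rho>) ^ n * (q / \<rho>)) * phi T q 0 \<le> V T \<delta> n (\<lambda>_. 1) * phi T q 0"
    by (simp only: mult_ac)
  thus ?thesis using P by (rule mult_right_le_imp_le)
qed

end


definition psi :: "nat \<Rightarrow> real \<Rightarrow> real \<Rightarrow> nat \<Rightarrow> real" where
  "psi T q s r = q ^ r + s * q ^ (T - r)"

definition Gn :: "nat \<Rightarrow> real \<Rightarrow> real \<Rightarrow> nat \<Rightarrow> real" where
  "Gn T q s a = (if a mod T = 0 then s ^ (a div T) else s ^ (a div T) * psi T q s (a mod T))"

definition GG :: "nat \<Rightarrow> real \<Rightarrow> real \<Rightarrow> int \<Rightarrow> real" where
  "GG T q s y = Gn T q s (nat \<bar>y\<bar>)"

definition eta :: "nat \<Rightarrow> real \<Rightarrow> real \<Rightarrow> real" where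
  "eta T q s = q ^ (T - 2) * (s + 1/s) / 2"

context
  fixes T :: nat and q \<rho> \<delta> s :: real
  assumes T2: "T \<ge> 2" and q0: "0 < q" and q1: "q < 1" and rho: "\<rho> = (q + 1/q)/2"
    and ed: "exp \<delta> * q = \<rho>" and s0: "0 < s" and s1: "s \<le> 1"
begin

lemma rho_pos': "\<rho> > 0"
proof -
  have "q + 1/q > 0" using q0 by (simp add: add_pos_pos)
  thus ?thesis using rho by simp
qed

lemma ed': "exp \<delta> = \<rho> / q" using ed q0 by (simp add: field_simps)

lemma psi_rec:
  assumes "Suc (Suc j) \<le> T"
  shows "psi T q s j + psi T q s (Suc (Suc j)) = (q + 1/q) * psi T q s (Suc j)"
proof -
  obtain m where m: "T = Suc (Suc j) + m" using assms le_Suc_ex by blast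
  have e1: "T - j = Suc (Suc m)" and e2: "T - Suc j = Suc m" and e3: "T - Suc (Suc j) = m" using m by auto
  show ?thesis unfolding psi_def e1 e2 e3 using q0 by (simp add: field_simps)
qed

lemma psi_nonneg: "psi T q s r \<ge> 0" using q0 s0 by (simp add: psi_def)

lemma Gn_kr: "r < T \<Longrightarrow> Gn T q s (k * T + r) = (if r = 0 then s ^ k else s ^ k * psi T q s r)"
  unfolding Gn_def by simp

lemma Gn_nonneg: "Gn T q s a \<ge> 0" using s0 psi_nonneg by (simp add: Gn_def)

lemma Gn_le_psi: assumes "r < T" shows "Gn T q s (k * T + r) \<le> s ^ k * psi T q s r"
proof (cases "r = 0")
  case True
  have "1 \<le> psi T q s 0" using q0 s0 by (simp add: psi_def)
  hence "s ^ k * 1 \<le> s ^ k * psi T q s 0" using s0 by (intro mult_left_mono) auto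
  thus ?thesis using Gn_kr[OF assms, of k] True by simp
qed (use assms in \<open>simp add: Gn_kr\<close>)

lemma Gn_next: "Gn T q s (Suc k * T + 0) \<le> s ^ k * psi T q s T"
proof -
  have "Gn T q s (Suc k * T + 0) = s ^ Suc k" using T2 by (subst Gn_kr) auto
  also have "\<dots> = s ^ k * s" by simp
  also have "\<dots> \<le> s ^ k * psi T q s T" using s0 q0 by (intro mult_left_mono) (auto simp: psi_def)
  finally show ?thesis .
qed

lemma Gn_noncontact:
  assumes "a mod T \<noteq> 0"
  shows "Gn T q s (a - 1) + Gn T q s (a + 1) \<le> (q + 1/q) * Gn T q s a"
proof -
  define k where "k = a div T"
  define r where "r = a mod T"
  have a: "a = k * T + r" unfolding k_def r_def by simp
  have rT: "r < T" unfolding r_def using T2 by simp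
  obtain j where j: "r = Suc j" using assms r_def by (metis not0_implies_Suc)
  have l: "Gn T q s (a - 1) \<le> s ^ k * psi T q s j"
  proof -
    have "a - 1 = k * T + j" using a j by simp
    thus ?thesis using Gn_le_psi[of j k] rT j by simp
  qed
  have u: "Gn T q s (a + 1) \<le> s ^ k * psi T q s (Suc (Suc j))"
  proof (cases "Suc (Suc j) = T")
    case True
    have "a + 1 = Suc k * T + 0" using a j True by simp
    thus ?thesis using Gn_next[of k] True by simp
  next
    case False
    hence "Suc (Suc j) < T" using rT j by simp
    moreover have "a + 1 = k * T + Suc (Suc j)" using a j by simp
    ultimately show ?thesis using Gn_le_psi[of "Suc (Suc j)" k] by simp
  qed
  have jT: "Suc (Suc j) \<le> T" using rT j by simp
  have "Gn T q s (a - 1) + Gn T q s (a + 1) \<le> s ^ k * (psi T q s j + psi T q s (Suc (Suc j)))"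
    using l u by (simp add: algebra_simps)
  also have "\<dots> = (q + 1/q) * (s ^ k * psi T q s (Suc j))" using psi_rec[OF jT] by simp
  also have "s ^ k * psi T q s (Suc j) = Gn T q s a" unfolding a using Gn_kr[OF rT, of k] j by simp
  finally show ?thesis .
qed

lemma Gn_contact:
  assumes "a mod T = 0" "a \<ge> 1"
  shows "\<rho> / q * (Gn T q s (a - 1) + Gn T q s (a + 1)) = 2 * \<rho> * (1 + eta T q s) * Gn T q s a"
proof -
  define k where "k = a div T"
  have a: "a = k * T" unfolding k_def using assms(1) by (metis mult.commute mult_div_mod_eq add_0_right)
  obtain k' where k': "k = Suc k'" using a assms(2) by (metis mult_is_0 not0_implies_Suc not_one_le_zero)
  obtain m where m: "T = Suc (Suc m)" using T2 by (metis add_2_eq_Suc le_Suc_ex)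
  have e1: "a - 1 = k' * T + Suc m" using a k' m by simp
  have e2: "a + 1 = k * T + 1" using a by simp
  have g1: "Gn T q s (a - 1) = s ^ k' * (q ^ Suc m + s * q)"
    unfolding e1 by (subst Gn_kr) (auto simp: m psi_def)
  have g2: "Gn T q s (a + 1) = s ^ k * (q + s * q ^ Suc m)"
    unfolding e2 by (subst Gn_kr) (auto simp: m psi_def)
  have g0: "Gn T q s a = s ^ k" using a T2 Gn_kr[of 0 k] by simp
  show ?thesis unfolding g0 g1 g2 eta_def k' using q0 s0 by (simp add: m field_simps power2_eq_square)
qed

lemma eta_nonneg: "eta T q s \<ge> 0" using q0 s0 by (simp add: eta_def)

lemma GG_nonneg: "GG T q s y \<ge> 0" by (simp add: GG_def Gn_nonneg)

lemma GG_0: "GG T q s 0 = 1" by (simp add: GG_def Gn_def)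

lemma GG_super: "ee T \<delta> y * (GG T q s (y - 1) + GG T q s (y + 1)) \<le> 2 * \<rho> * (1 + eta T q s) * GG T q s y"
proof (cases "y = 0")
  case True
  have g1: "GG T q s (-1) = q + s * q ^ (T - 1)" "GG T q s 1 = q + s * q ^ (T - 1)"
    using T2 by (auto simp: GG_def Gn_def psi_def)
  obtain m where m: "T = Suc (Suc m)" using T2 by (metis add_2_eq_Suc le_Suc_ex)
  have "s \<le> (s + 1/s) / 2"
  proof -
    have "s \<le> 1/s" using s0 s1 by (simp add: field_simps) (metis mult_le_one s0 less_imp_le s1)
    thus ?thesis by simp
  qed
  hence "q ^ m * s \<le> q ^ m * ((s + 1/s) / 2)" using q0 by (intro mult_left_mono) auto
  hence "2 * \<rho> * (1 + q ^ m * s) \<le> 2 * \<rho> * (1 + eta T q s)"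
    using rho_pos' by (intro mult_left_mono) (auto simp: eta_def m)
  moreover have "\<rho> / q * (2 * (q + s * q ^ (T - 1))) = 2 * \<rho> * (1 + q ^ m * s)"
    using q0 by (simp add: field_simps m)
  moreover have "ee T \<delta> y * (GG T q s (y - 1) + GG T q s (y + 1)) = \<rho> / q * (2 * (q + s * q ^ (T - 1)))"
    using True g1 by (simp add: ee_def ed')
  ultimately show ?thesis using True GG_0 by simp
next
  case False
  define a where "a = nat \<bar>y\<bar>"
  have a1: "a \<ge> 1" using False a_def by simp
  have S: "GG T q s (y - 1) + GG T q s (y + 1) = Gn T q s (a - 1) + Gn T q s (a + 1)"
  proof (cases "y > 0")
    case True
    hence "nat \<bar>y - 1\<bar> = a - 1" "nat \<bar>y + 1\<bar> = a + 1" using a_def by auto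
    thus ?thesis unfolding GG_def by (simp only:)
  next
    case False
    hence "nat \<bar>y - 1\<bar> = a + 1" "nat \<bar>y + 1\<bar> = a - 1" using a_def \<open>y \<noteq> 0\<close> by auto
    thus ?thesis unfolding GG_def by (simp only: add.commute)
  qed
  have dv: "int T dvd y \<longleftrightarrow> a mod T = 0"
  proof -
    have "int T dvd y \<longleftrightarrow> int T dvd \<bar>y\<bar>" by simp
    also have "\<dots> \<longleftrightarrow> T dvd a" unfolding a_def by (metis abs_ge_zero int_nat_eq of_nat_dvd_iff)
    finally show ?thesis by (simp add: dvd_eq_mod_eq_0)
  qed
  have Ga: "GG T q s y = Gn T q s a" by (simp add: GG_def a_def)
  show ?thesis
  proof (cases "a mod T = 0")
    case True
    thus ?thesis unfolding S Ga using dv Gn_contact[OF True a1] by (simp add: ee_def ed')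
  next
    case False
    have "Gn T q s (a - 1) + Gn T q s (a + 1) \<le> (q + 1/q) * Gn T q s a" by (rule Gn_noncontact[OF False])
    also have "\<dots> = 2 * \<rho> * Gn T q s a" using rho by simp
    also have "\<dots> \<le> 2 * \<rho> * (1 + eta T q s) * Gn T q s a"
      using rho_pos' eta_nonneg Gn_nonneg[of a] by (simp add: mult_left_mono algebra_simps mult_nonneg_nonneg)
    finally show ?thesis unfolding S Ga using dv False by (simp add: ee_def)
  qed
qed

lemma K_upper: "K T \<delta> n y \<le> (2 * \<rho> * (1 + eta T q s)) ^ n * GG T q s y"
  using GG_nonneg GG_0 GG_super rho_pos' eta_nonneg
  by (intro K_super) (auto intro!: mult_nonneg_nonneg)

end


lemma sum_sym:
  fixes F :: "nat \<Rightarrow> real"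
  assumes "\<And>a. F a \<ge> 0"
  shows "(\<Sum>y\<in>{-int n..int n}. F (nat \<bar>y\<bar>)) \<le> 2 * (\<Sum>a\<in>{..n}. F a)"
proof (induction n)
  case 0 thus ?case using assms[of 0] by simp
next
  case (Suc n)
  have e: "{-int (Suc n)..int (Suc n)} = insert (int (Suc n)) (insert (- int (Suc n)) {-int n..int n})" by auto
  have "(\<Sum>y\<in>{-int (Suc n)..int (Suc n)}. F (nat \<bar>y\<bar>)) = F (Suc n) + F (Suc n) + (\<Sum>y\<in>{-int n..int n}. F (nat \<bar>y\<bar>))"
  proof -
    have "nat (int n + 1) = Suc n" "nat (1 + int n) = Suc n" "nat (- int n - 1) = 0" by auto
    thus ?thesis unfolding e by simp
  qed
  also have "\<dots> \<le> 2 * (\<Sum>a\<in>{..Suc n}. F a)" using Suc by simp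
  finally show ?case .
qed

lemma geo_bound: fixes x :: real assumes "0 \<le> x" "x < 1" shows "(\<Sum>i<n. x ^ i) \<le> 1 / (1 - x)"
proof -
  have "(\<Sum>i<n. x ^ i) = (1 - x ^ n) / (1 - x)" using assms by (simp add: sum_gp_strict)
  also have "\<dots> \<le> 1 / (1 - x)" using assms by (intro divide_right_mono) auto
  finally show ?thesis .
qed

lemma Gn_kr': "r < T \<Longrightarrow> Gn T q s (k * T + r) = (if r = 0 then s ^ k else s ^ k * psi T q s r)"
  unfolding Gn_def by simp

lemma Gn_nonneg': "q \<ge> 0 \<Longrightarrow> s \<ge> 0 \<Longrightarrow> Gn T q s a \<ge> 0"
  by (simp add: Gn_def psi_def)

lemma regroup:
  fixes g :: "nat \<Rightarrow> nat \<Rightarrow> real"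
  assumes "T > 0"
  shows "(\<Sum>a<M * T. g (a div T) (a mod T)) = (\<Sum>k<M. \<Sum>r<T. g k r)"
proof -
  have "(\<Sum>a<M * T. g (a div T) (a mod T)) = (\<Sum>k<M. \<Sum>a\<in>{k * T..<k * T + T}. g (a div T) (a mod T))"
    by (rule sum.nat_group[symmetric])
  also have "\<dots> = (\<Sum>k<M. \<Sum>r<T. g k r)"
  proof (rule sum.cong[OF refl])
    fix k
    have "(\<lambda>r. r + k * T) ` {0..<T} = {0 + k * T..<T + k * T}" by (rule image_add_atLeastLessThan')
    hence im: "{k * T..<k * T + T} = (\<lambda>r. k * T + r) ` {..<T}" by (simp add: add.commute atLeast0LessThan)
    show "(\<Sum>a\<in>{k * T..<k * T + T}. g (a div T) (a mod T)) = (\<Sum>r<T. g k r)"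
      unfolding im using assms by (simp add: sum.reindex inj_on_def)
  qed
  finally show ?thesis .
qed

context
  fixes T :: nat and q p s \<sigma> :: real and l :: nat
  assumes T2: "T \<ge> 2" and p0: "0 < p" and p1: "p < 1" and qp: "q = p ^ 2"
    and sg0: "0 < \<sigma>" and sg1: "\<sigma> < 1" and ss: "s = \<sigma> ^ 2"
begin

lemma q0: "0 < q" and q1: "q < 1" using p0 p1 qp by (auto simp: power_less_one_iff)

lemma Gn_pt:
  "(if l < a then Gn T q s a else 0) \<le> p ^ l * p ^ a + \<sigma> * \<sigma> ^ (a div T) * (q ^ (a mod T) + q ^ (T - Suc (a mod T)))"
proof -
  define k where "k = a div T"
  define r where "r = a mod T"
  have rT: "r < T" using T2 unfolding r_def by simp
  have a: "a = k * T + r" unfolding k_def r_def by simp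
  have s0: "s \<ge> 0" using ss by simp
  have q0': "q \<ge> 0" using q0 by simp
  have G: "Gn T q s a \<le> (if k = 0 then q ^ a else s ^ k * q ^ r) + s ^ Suc k * q ^ (T - r)"
  proof (cases "r = 0")
    case True
    have "Gn T q s a = s ^ k" using a True rT Gn_kr'[OF rT, of q s k] by (simp add: Gn_def)
    moreover have "0 \<le> s ^ Suc k * q ^ (T - r)" using s0 q0' by simp
    ultimately show ?thesis using True a by auto
  next
    case False
    have "Gn T q s a = s ^ k * q ^ r + s ^ Suc k * q ^ (T - r)"
      using a False rT Gn_kr'[OF rT, of q s k] by (simp add: psi_def algebra_simps)
    thus ?thesis using a by auto
  qed
  have t2: "s ^ Suc k * q ^ (T - r) \<le> \<sigma> * \<sigma> ^ k * q ^ (T - Suc r)"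
  proof -
    have "s ^ Suc k = \<sigma> ^ (2 * Suc k)" using ss by (simp only: power_mult)
    also have "\<dots> \<le> \<sigma> ^ Suc k" using sg0 sg1 by (intro power_decreasing) auto
    finally have A: "s ^ Suc k \<le> \<sigma> * \<sigma> ^ k" by simp
    have B: "q ^ (T - r) \<le> q ^ (T - Suc r)" using q0 q1 rT by (intro power_decreasing) auto
    show ?thesis using A B s0 q0' sg0 by (intro mult_mono) auto
  qed
  have t1: "(if l < a then (if k = 0 then q ^ a else s ^ k * q ^ r) else 0) \<le> p ^ l * p ^ a + \<sigma> * \<sigma> ^ k * q ^ r"
  proof (cases "l < a")
    case True
    show ?thesis
    proof (cases "k = 0")
      case True
      have "q ^ a = p ^ a * p ^ a" using qp by (simp add: power_mult[symmetric] mult_2 power_add)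
      also have "\<dots> \<le> p ^ l * p ^ a" using \<open>l < a\<close> p0 p1 by (intro mult_right_mono power_decreasing) auto
      finally show ?thesis using True \<open>l < a\<close> sg0 q0' by (simp add: add_increasing2)
    next
      case False
      have "s ^ k = \<sigma> ^ (2 * k)" using ss by (simp only: power_mult)
      also have "\<dots> \<le> \<sigma> ^ Suc k" using sg0 sg1 False by (intro power_decreasing) auto
      finally have "s ^ k * q ^ r \<le> \<sigma> * \<sigma> ^ k * q ^ r" using q0' by (simp add: mult_right_mono)
      thus ?thesis using False \<open>l < a\<close> p0 by (simp add: add_increasing)
    qed
  next
    case False
    thus ?thesis using p0 sg0 q0' by simp
  qed
  have "(if l < a then Gn T q s a else 0) \<le> (if l < a then (if k = 0 then q ^ a else s ^ k * q ^ r) else 0) + s ^ Suc k * q ^ (T - r)"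
    using G s0 q0' by auto
  also have "\<dots> \<le> p ^ l * p ^ a + \<sigma> * \<sigma> ^ k * q ^ r + \<sigma> * \<sigma> ^ k * q ^ (T - Suc r)"
    using t1 t2 by linarith
  finally show ?thesis unfolding k_def r_def by (simp add: algebra_simps)
qed

lemma Gn_sum:
  "(\<Sum>a\<in>{..n}. if l < a then Gn T q s a else 0) \<le> p ^ l / (1 - p) + \<sigma> / (1 - \<sigma>) * (2 / (1 - q))"
proof -
  define M where "M = Suc (n div T)"
  have TM: "n < M * T"
  proof -
    have "n mod T < T" using T2 by simp
    moreover have "n = n div T * T + n mod T" by simp
    moreover have "M * T = T + n div T * T" unfolding M_def by simp
    ultimately show ?thesis by linarith
  qed
  have s0: "s \<ge> 0" using ss by simp
  have nonneg: "\<And>a. (if l < a then Gn T q s a else 0) \<ge> 0" using Gn_nonneg'[of q s] q0 s0 by simp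
  have Sq: "(\<Sum>r<T. q ^ r) \<le> 1 / (1 - q)" using q0 q1 by (intro geo_bound) auto
  have Ss: "(\<Sum>k<M. \<sigma> ^ k) \<le> 1 / (1 - \<sigma>)" using sg0 sg1 by (intro geo_bound) auto
  have Sp: "(\<Sum>a<M * T. p ^ a) \<le> 1 / (1 - p)" using p0 p1 by (intro geo_bound) auto
  have "(\<Sum>a\<in>{..n}. if l < a then Gn T q s a else 0) \<le> (\<Sum>a<M * T. if l < a then Gn T q s a else 0)"
    using TM nonneg by (intro sum_mono2) auto
  also have "\<dots> \<le> (\<Sum>a<M * T. p ^ l * p ^ a + \<sigma> * \<sigma> ^ (a div T) * (q ^ (a mod T) + q ^ (T - Suc (a mod T))))"
    by (intro sum_mono Gn_pt)
  also have "\<dots> = p ^ l * (\<Sum>a<M * T. p ^ a) + (\<Sum>k<M. \<Sum>r<T. \<sigma> * \<sigma> ^ k * (q ^ r + q ^ (T - Suc r)))"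
    using regroup[of T "\<lambda>k r. \<sigma> * \<sigma> ^ k * (q ^ r + q ^ (T - Suc r))" M] T2
    by (simp add: sum.distrib sum_distrib_left)
  also have "(\<Sum>k<M. \<Sum>r<T. \<sigma> * \<sigma> ^ k * (q ^ r + q ^ (T - Suc r))) = \<sigma> * (\<Sum>k<M. \<sigma> ^ k) * (2 * (\<Sum>r<T. q ^ r))"
  proof -
    have "(\<Sum>r<T. q ^ (T - Suc r)) = (\<Sum>r<T. q ^ r)" by (rule sum.nat_diff_reindex)
    have "\<And>k. (\<Sum>r<T. \<sigma> * \<sigma> ^ k * (q ^ r + q ^ (T - Suc r))) = \<sigma> * \<sigma> ^ k * (2 * (\<Sum>r<T. q ^ r))"
    proof -
      fix k
      have "(\<Sum>r<T. \<sigma> * \<sigma> ^ k * (q ^ r + q ^ (T - Suc r))) = \<sigma> * \<sigma> ^ k * (\<Sum>r<T. q ^ r + q ^ (T - Suc r))"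
        by (rule sum_distrib_left[symmetric])
      also have "(\<Sum>r<T. q ^ r + q ^ (T - Suc r)) = (\<Sum>r<T. q ^ r) + (\<Sum>r<T. q ^ (T - Suc r))"
        by (rule sum.distrib)
      finally show "?thesis k" using \<open>(\<Sum>r<T. q ^ (T - Suc r)) = (\<Sum>r<T. q ^ r)\<close> by simp
    qed
    hence "(\<Sum>k<M. \<Sum>r<T. \<sigma> * \<sigma> ^ k * (q ^ r + q ^ (T - Suc r))) = (\<Sum>k<M. \<sigma> ^ k * (\<sigma> * (2 * (\<Sum>r<T. q ^ r))))"
      by (intro sum.cong refl) (simp only: mult_ac)
    also have "\<dots> = (\<Sum>k<M. \<sigma> ^ k) * (\<sigma> * (2 * (\<Sum>r<T. q ^ r)))" by (rule sum_distrib_right[symmetric])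
    finally show ?thesis by (simp only: mult_ac)
  qed
  also have "p ^ l * (\<Sum>a<M * T. p ^ a) + \<sigma> * (\<Sum>k<M. \<sigma> ^ k) * (2 * (\<Sum>r<T. q ^ r))
      \<le> p ^ l * (1 / (1 - p)) + \<sigma> * (1 / (1 - \<sigma>)) * (2 * (1 / (1 - q)))"
    using Sq Ss Sp p0 sg0 sg1 q0 by (intro add_mono mult_mono mult_left_mono) (auto intro!: sum_nonneg)
  finally show ?thesis by simp
qed

end


lemma prob_as_V:
  "polymer_prob T N \<delta> A = V T \<delta> N (\<lambda>y. 0) / 1 * 0 + (\<Sum>xs\<in>srw_paths N. polymer_weight T N \<delta> xs * (if A xs then 1 else 0)) / V T \<delta> N (\<lambda>_. 1)"
  unfolding polymer_prob_def polymer_Z_def V_def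
  by (simp add: sum.inter_filter[OF finite_paths] if_distrib cong: if_cong)

lemma prob_bound:
  fixes L :: real
  assumes T2: "T \<ge> 2" and p0: "0 < p" and p1: "p < 1" and qp: "q = p ^ 2" and rho: "\<rho> = (q + 1/q)/2"
    and ed: "exp \<delta> * q = \<rho>" and sg0: "0 < \<sigma>" and sg1: "\<sigma> < 1" and ss: "s = \<sigma> ^ 2"
    and lL: "real l \<le> L"
  shows "polymer_prob T N \<delta> (\<lambda>xs. \<bar>walk_pos xs N\<bar> > L)
     \<le> (1 + eta T q s) ^ N * (\<rho> / q) * (2 * (p ^ l / (1 - p) + \<sigma> / (1 - \<sigma>) * (2 / (1 - q))))"
proof -
  have q0: "0 < q" and q1: "q < 1" using p0 p1 qp by (auto simp: power_less_one_iff)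
  have s0: "0 < s" and s1: "s \<le> 1" using sg0 sg1 ss by (auto simp: power_le_one)
  have rp: "\<rho> > 0" using rho_pos'[OF T2 q0 q1 rho ed s0 s1] .
  define B where "B = p ^ l / (1 - p) + \<sigma> / (1 - \<sigma>) * (2 / (1 - q))"
  define R where "R = 2 * \<rho> * (1 + eta T q s)"
  define f :: "int \<Rightarrow> real" where "f y = (if L < real_of_int \<bar>y\<bar> then 1 else 0)" for y
  have B0: "B \<ge> 0" unfolding B_def using p0 p1 sg0 sg1 q1 by simp
  have R0: "R \<ge> 0" unfolding R_def using rp eta_nonneg[OF T2 q0 q1 rho ed s0 s1] by simp
  have num: "(\<Sum>xs\<in>srw_paths N. polymer_weight T N \<delta> xs * (if \<bar>walk_pos xs N\<bar> > L then 1 else 0)) = V T \<delta> N f"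
    unfolding V_def f_def by simp
  have "V T \<delta> N f = (\<Sum>y\<in>{-int N..int N}. f y * K T \<delta> N y)" by (rule V_decomp)
  also have "\<dots> \<le> (\<Sum>y\<in>{-int N..int N}. R ^ N * (if l < nat \<bar>y\<bar> then Gn T q s (nat \<bar>y\<bar>) else 0))"
  proof (rule sum_mono)
    fix y
    show "f y * K T \<delta> N y \<le> R ^ N * (if l < nat \<bar>y\<bar> then Gn T q s (nat \<bar>y\<bar>) else 0)"
    proof (cases "L < real_of_int \<bar>y\<bar>")
      case True
      hence "l < nat \<bar>y\<bar>" using lL by linarith
      thus ?thesis using True K_upper[OF T2 q0 q1 rho ed s0 s1, of N y]
        by (simp add: f_def R_def GG_def)
    next
      case False
      thus ?thesis using R0 Gn_nonneg'[of q s] q0 s0 by (simp add: f_def)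
    qed
  qed
  also have "\<dots> = R ^ N * (\<Sum>y\<in>{-int N..int N}. (\<lambda>a. if l < a then Gn T q s a else 0) (nat \<bar>y\<bar>))"
    by (simp add: sum_distrib_left)
  also have "\<dots> \<le> R ^ N * (2 * (\<Sum>a\<in>{..N}. if l < a then Gn T q s a else 0))"
    using R0 Gn_nonneg'[of q s] q0 s0 by (intro mult_left_mono sum_sym) auto
  also have "\<dots> \<le> R ^ N * (2 * B)"
    unfolding B_def using R0 Gn_sum[OF T2 p0 p1 qp sg0 sg1 ss, of l N]
    by (intro mult_left_mono) auto
  finally have N: "V T \<delta> N f \<le> R ^ N * (2 * B)" .
  have D: "V T \<delta> N (\<lambda>_. 1) \<ge> (2 * \<rho>) ^ N * (q / \<rho>)" by (rule V_lower[OF T2 q0 q1 rho ed])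
  have Dp: "(2 * \<rho>) ^ N * (q / \<rho>) > 0" using rp q0 by simp
  have "polymer_prob T N \<delta> (\<lambda>xs. \<bar>walk_pos xs N\<bar> > L) = V T \<delta> N f / V T \<delta> N (\<lambda>_. 1)"
    using prob_as_V[of T N \<delta> "\<lambda>xs. \<bar>walk_pos xs N\<bar> > L"] num by simp
  also have "\<dots> \<le> R ^ N * (2 * B) / ((2 * \<rho>) ^ N * (q / \<rho>))"
    using N D Dp V_nonneg[of f] B0 R0 by (intro frac_le) (auto simp: f_def)
  also have "\<dots> = (1 + eta T q s) ^ N * (\<rho> / q) * (2 * B)"
  proof -
    have e: "R ^ N = (2 * \<rho>) ^ N * (1 + eta T q s) ^ N" unfolding R_def by (rule power_mult_distrib)
    have Y: "(2 * \<rho>) ^ N > 0" using rp by simp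
    define Y where "Y = (2 * \<rho>) ^ N"
    have "Y > 0" using Y Y_def by simp
    thus ?thesis unfolding e Y_def[symmetric] using rp q0 by (simp add: field_simps)
  qed
  finally show ?thesis unfolding B_def .
qed



lemma c_facts:
  assumes "\<delta> > 0"
  shows "c_delta \<delta> > 0" "exp \<delta> * exp (- c_delta \<delta>) = (exp (- c_delta \<delta>) + 1 / exp (- c_delta \<delta>)) / 2"
proof -
  define c where "c = c_delta \<delta>"
  define X where "X = 2 - exp (- \<delta>)"
  have e1: "exp (- \<delta>) < 1" using assms by simp
  have a: "X > 1" using e1 X_def by simp
  have c: "c = \<delta> / 2 + ln (sqrt X)" unfolding c_def c_delta_def X_def ..
  have sq: "sqrt X > 1" using a by simp
  hence "ln (sqrt X) > 0" by simp
  thus "c_delta \<delta> > 0" using assms c c_def by simp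
  have "2 * c = \<delta> + ln (sqrt X) + ln (sqrt X)" using c by simp
  hence "exp (2 * c) = exp (\<delta> + ln (sqrt X) + ln (sqrt X))" by simp
  also have "\<dots> = exp \<delta> * exp (ln (sqrt X)) * exp (ln (sqrt X))" by (simp only: exp_add)
  also have "\<dots> = exp \<delta> * X" using sq a by simp
  also have "\<dots> = 2 * exp \<delta> - 1" unfolding X_def by (simp add: algebra_simps exp_minus field_simps)
  finally have E: "exp (2 * c) = 2 * exp \<delta> - 1" .
  have E2: "exp (2 * c) = exp c * exp c" by (simp add: exp_add[symmetric])
  have "exp \<delta> * exp (- c) = (exp (- c) + 1 / exp (- c)) / 2"
    using E E2 by (simp add: exp_minus field_simps)
  thus "exp \<delta> * exp (- c_delta \<delta>) = (exp (- c_delta \<delta>) + 1 / exp (- c_delta \<delta>)) / 2" unfolding c_def .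
qed

theorem theorem2:
  fixes \<delta> :: real and T :: "nat \<Rightarrow> nat"
  assumes "\<delta> > 0"
    and "\<And>N. even (T N)"
    and "\<And>N. T N \<le> N"
    and "filterlim T at_top sequentially"
    and "filterlim (\<lambda>N. real (T N) - ln (real N) / c_delta \<delta>) at_top sequentially"
  shows "((\<lambda>L::real. SUP N. polymer_prob (T N) N \<delta> (\<lambda>xs. \<bar>walk_pos xs N\<bar> > L))
           \<longlongrightarrow> 0) at_top"
proof -
  define c where "c = c_delta \<delta>"
  have c0: "c > 0" and ceq: "exp \<delta> * exp (- c) = (exp (- c) + 1 / exp (- c)) / 2"
    using c_facts[OF assms(1)] unfolding c_def by auto
  define p where "p = exp (- c / 2)"
  define q where "q = p ^ 2"
  have qc: "q = exp (- c)" unfolding q_def p_def by (simp add: power2_eq_square exp_add[symmetric])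
  have p0: "0 < p" and p1: "p < 1" unfolding p_def using c0 by auto
  have q0: "0 < q" and q1: "q < 1" unfolding qc using c0 by auto
  define \<rho> where "\<rho> = (q + 1/q) / 2"
  have ed: "exp \<delta> * q = \<rho>" using ceq unfolding qc \<rho>_def .
  have rp: "\<rho> > 0" unfolding \<rho>_def using q0 by (simp add: add_pos_pos)
  define Cq where "Cq = \<rho> / q * 2 * exp 1"
  have Cq0: "Cq > 0" unfolding Cq_def using rp q0 by simp
  show ?thesis
  proof (rule tendstoI)
    fix \<epsilon> :: real assume e0: "\<epsilon> > 0"
    define \<sigma> where "\<sigma> = min (1/2) (\<epsilon> * (1 - q) / (16 * Cq))"
    have sg0: "\<sigma> > 0" unfolding \<sigma>_def using e0 q1 Cq0 by simp
    have sg2: "\<sigma> \<le> 1/2" unfolding \<sigma>_def by simp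
    have sg1: "\<sigma> < 1" using sg2 by simp
    have sg3: "\<sigma> \<le> \<epsilon> * (1 - q) / (16 * Cq)" unfolding \<sigma>_def by simp
    define s where "s = \<sigma> ^ 2"
    have s0: "s > 0" unfolding s_def using sg0 by simp
    define D where "D = (s + 1/s) / (2 * q ^ 2)"
    have D0: "D > 0" unfolding D_def using s0 q0 by (simp add: add_pos_pos)
    define Rr where "Rr = ln D / c"
    have ev1: "eventually (\<lambda>N. 2 \<le> T N) sequentially"
      using assms(4) unfolding filterlim_at_top by blast
    have ev2: "eventually (\<lambda>N. Rr \<le> real (T N) - ln (real N) / c) sequentially"
      using assms(5) unfolding filterlim_at_top c_def by blast
    obtain N0 where N0: "\<And>N. N \<ge> N0 \<Longrightarrow> 2 \<le> T N \<and> Rr \<le> real (T N) - ln (real N) / c"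
      using eventually_conj[OF ev1 ev2] unfolding eventually_sequentially by blast
    define N1 where "N1 = max N0 1"
    have "(\<lambda>n. p ^ n) \<longlonglongrightarrow> 0" using p0 p1 by (intro LIMSEQ_power_zero) simp
    moreover have "\<epsilon> * (1 - p) / (4 * Cq) > 0" using e0 p1 Cq0 by simp
    ultimately have "eventually (\<lambda>n. p ^ n < \<epsilon> * (1 - p) / (4 * Cq)) sequentially"
      by (rule order_tendstoD(2))
    then obtain l where l: "p ^ l < \<epsilon> * (1 - p) / (4 * Cq)" unfolding eventually_sequentially by blast
    define L0 where "L0 = max (real N1) (real l)"
    show "eventually (\<lambda>L::real. dist (SUP N. polymer_prob (T N) N \<delta> (\<lambda>xs. \<bar>walk_pos xs N\<bar> > L)) 0 < \<epsilon>) at_top"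
      unfolding eventually_at_top_linorder
    proof (rule exI[where x=L0], intro allI impI)
      fix L :: real assume L: "L \<ge> L0"
      have nn: "0 \<le> polymer_prob (T N) N \<delta> (\<lambda>xs. \<bar>walk_pos xs N\<bar> > L)" for N
        using prob_as_V[of "T N" N \<delta> "\<lambda>xs. \<bar>walk_pos xs N\<bar> > L"] V_nonneg[of "\<lambda>_. 1" "T N" \<delta> N]
        by (simp add: sum_nonneg pw_pos less_imp_le)
      have bnd: "polymer_prob (T N) N \<delta> (\<lambda>xs. \<bar>walk_pos xs N\<bar> > L) \<le> \<epsilon> / 2" for N
      proof (cases "N < N1")
        case True
        have "\<And>xs. xs \<in> srw_paths N \<Longrightarrow> \<not> (\<bar>walk_pos xs N\<bar> > L)"
        proof -
          fix xs assume "xs \<in> srw_paths N"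
          hence "\<bar>walk_pos xs N\<bar> \<le> int N" by (rule walk_bound)
          moreover have "real N < L" using True L unfolding L0_def by linarith
          ultimately show "\<not> (\<bar>walk_pos xs N\<bar> > L)" by linarith
        qed
        hence "polymer_prob (T N) N \<delta> (\<lambda>xs. \<bar>walk_pos xs N\<bar> > L) = 0"
          using prob_as_V[of "T N" N \<delta> "\<lambda>xs. \<bar>walk_pos xs N\<bar> > L"] by simp
        thus ?thesis using e0 by simp
      next
        case False
        hence NN: "N \<ge> N0" "N \<ge> 1" unfolding N1_def by auto
        have T2: "T N \<ge> 2" and TR: "Rr \<le> real (T N) - ln (real N) / c" using N0[OF NN(1)] by auto
        define \<eta> where "\<eta> = eta (T N) q s"
        have eta0: "\<eta> \<ge> 0" unfolding \<eta>_def eta_def using q0 s0 by simp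
        have Neta: "real N * \<eta> \<le> 1"
        proof -
          have qT: "q ^ T N = exp (- c * real (T N))" unfolding qc by (simp add: exp_of_nat_mult[symmetric] mult.commute)
          have q2: "q ^ (T N - 2) = q ^ T N / q ^ 2" using T2 q0 by (simp add: power_diff)
          have "c * Rr \<le> c * real (T N) - ln (real N)" using TR c0 by (simp add: field_simps)
          hence "- c * real (T N) \<le> - ln (real N) - c * Rr" by simp
          hence "exp (- c * real (T N)) \<le> exp (- ln (real N) - c * Rr)" by simp
          also have "\<dots> = 1 / (real N * D)"
            unfolding Rr_def using c0 D0 NN(2) by (simp add: exp_diff exp_minus field_simps)
          finally have "q ^ T N \<le> 1 / (real N * D)" unfolding qT .
          hence "real N * D * q ^ T N \<le> 1" using NN(2) D0 by (simp add: field_simps)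
          moreover have "\<eta> = D * q ^ T N"
            unfolding \<eta>_def eta_def q2 D_def using q0 by (simp add: field_simps)
          ultimately show ?thesis by (simp add: mult.assoc)
        qed
        have pw: "(1 + \<eta>) ^ N \<le> exp 1"
        proof -
          have "(1 + \<eta>) ^ N \<le> exp \<eta> ^ N" using eta0 by (intro power_mono) auto
          also have "\<dots> = exp (real N * \<eta>)" by (simp add: exp_of_nat_mult)
          also have "\<dots> \<le> exp 1" using Neta by simp
          finally show ?thesis .
        qed
        define B where "B = p ^ l / (1 - p) + \<sigma> / (1 - \<sigma>) * (2 / (1 - q))"
        have B0: "B \<ge> 0" unfolding B_def using p0 p1 sg0 sg1 q1 by simp
        have "polymer_prob (T N) N \<delta> (\<lambda>xs. \<bar>walk_pos xs N\<bar> > L) \<le> (1 + \<eta>) ^ N * (\<rho> / q) * (2 * B)"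
          unfolding \<eta>_def B_def
          by (rule prob_bound[OF T2 p0 p1 q_def \<rho>_def ed sg0 sg1 s_def]) (use L in \<open>simp add: L0_def\<close>)
        also have "\<dots> \<le> exp 1 * (\<rho> / q) * (2 * B)"
          using pw rp q0 B0 by (intro mult_right_mono) auto
        also have "\<dots> = Cq * (p ^ l / (1 - p)) + Cq * (\<sigma> / (1 - \<sigma>) * (2 / (1 - q)))"
          unfolding Cq_def B_def by (simp add: algebra_simps)
        also have "\<dots> \<le> \<epsilon> / 4 + \<epsilon> / 4"
        proof (rule add_mono)
          show "Cq * (p ^ l / (1 - p)) \<le> \<epsilon> / 4" using l Cq0 p1 by (simp add: field_simps)
          have "\<sigma> / (1 - \<sigma>) \<le> 2 * \<sigma>" using sg0 sg2 by (simp add: field_simps)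
          hence "Cq * (\<sigma> / (1 - \<sigma>) * (2 / (1 - q))) \<le> Cq * (2 * \<sigma> * (2 / (1 - q)))"
            using Cq0 q1 by (intro mult_left_mono mult_right_mono) auto
          also have "\<dots> = 4 * Cq * \<sigma> / (1 - q)" by simp
          also have "\<dots> \<le> 4 * Cq * (\<epsilon> * (1 - q) / (16 * Cq)) / (1 - q)"
            using sg3 Cq0 q1 by (intro divide_right_mono mult_left_mono) auto
          also have "\<dots> = \<epsilon> / 4" using Cq0 q1 by (simp add: field_simps)
          finally show "Cq * (\<sigma> / (1 - \<sigma>) * (2 / (1 - q))) \<le> \<epsilon> / 4" .
        qed
        finally show ?thesis by simp
      qed
      have S1: "(SUP N. polymer_prob (T N) N \<delta> (\<lambda>xs. \<bar>walk_pos xs N\<bar> > L)) \<le> \<epsilon> / 2"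
        by (rule cSUP_least) (simp, rule bnd)
      have "bdd_above (range (\<lambda>N. polymer_prob (T N) N \<delta> (\<lambda>xs. \<bar>walk_pos xs N\<bar> > L)))"
        by (rule bdd_aboveI[where M="\<epsilon> / 2"]) (erule imageE, simp only: bnd)
      hence S2: "0 \<le> (SUP N. polymer_prob (T N) N \<delta> (\<lambda>xs. \<bar>walk_pos xs N\<bar> > L))"
        by (rule cSUP_upper2[where x=0]) (simp, rule nn)
      show "dist (SUP N. polymer_prob (T N) N \<delta> (\<lambda>xs. \<bar>walk_pos xs N\<bar> > L)) 0 < \<epsilon>"
        using S1 S2 e0 by (simp add: dist_real_def)
    qed
  qed
qed

end
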